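(* Let $\mathbf{x}_t=\mathbf{x}+t\mathbf{v}$, $t=1,2,\dots$, with $\mathbf{v}\neq\mathbf{0}$, and let points $\mathbf{o}_q$ (access points) form a homogeneous Poisson point process on $\mathbb{R}^2$ of density $\kappa>0$. For $0<r_0<R$, let $\mathcal{Q}_t$ be the set of points with $r_0\le\|\mathbf{d}_{t,q}\|\le R$, where $\mathbf{d}_{t,q}=\mathbf{x}_t-\mathbf{o}_q$, and let $d_{t,q,1}$ be the component of $\mathbf{d}_{t,q}$ along $\mathbf{v}$. Define $$\tilde{\mathbf{A}}_{T,v}=\sum_{t=1}^T\mathbb{E}\Big\{\sum_{q\in\mathcal{Q}_t}\frac{t^2d_{t,q,1}^2}{\|\mathbf{d}_{t,q}\|^8}\big(\|\mathbf{d}_{t,q}\|^2\mathbf{I}-\mathbf{d}_{t,q}\mathbf{d}_{t,q}^{\mathrm T}\big)\Big\},$$ the expectation being over the point process. Then $\frac{\lambda_{\min}(\tilde{\mathbf{A}}_{T,v})}{T(T+1)(2T+1)}\to\frac{\pi}{48}\kappa\big(\frac1{r_0^2}-\frac1{R^2}\big)$ as $T\to\infty$.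
   Context: The condition $\|\mathbf{d}_{t,q}\|\ge r_0$ encodes the paper's assumption that every access point used at time $t$ is at distance at least $r_0$ from the user. *)

theory Defs
  imports "HOL-Analysis.Analysis" "HOL-Probability.Probability"
begin

definition comp_along :: "real^2 \<Rightarrow> real^2 \<Rightarrow> real" where
  "comp_along v d = (d \<bullet> v) / norm v"

definition outer :: "real^2 \<Rightarrow> real^2 \<Rightarrow> real^2^2" where
  "outer a b = (\<chi> i j. a $ i * b $ j)"

definition lambda_min :: "real^2^2 \<Rightarrow> real" where
  "lambda_min A = Inf {l. \<exists>u. u \<noteq> 0 \<and> A *v u = l *\<^sub>R u}"

text \<open>Expectation of the sum of f over the points of a homogeneous Poisson point
  process of density kappa, observed in a bounded window B: the number of points in B
  is Poisson with mean kappa * |B| and, given that number n, the points are n i.i.d.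
  uniform points of B.  This is the law of the restriction of the PPP on R^2 to B, so
  for f vanishing outside B it equals the expectation of the sum over all points of
  the PPP.\<close>
definition ppp_expect ::
  "real \<Rightarrow> (real^2) set \<Rightarrow> (real^2 \<Rightarrow> 'b::{banach,second_countable_topology}) \<Rightarrow> 'b" where
  "ppp_expect kappa B f =
     (\<integral>n. (\<integral>\<omega>. (\<Sum>i<n. f (\<omega> i)) \<partial>(PiM {..<n} (\<lambda>_. uniform_measure lborel B)))
        \<partial>(measure_pmf (poisson_pmf (kappa * measure lborel B))))"

end

theory Submission
  imports Defs
begin

lemma poisson_mean:
  fixes rate :: real assumes r: "0 < rate"
  shows "integrable (measure_pmf (poisson_pmf rate)) (\<lambda>n. real n)"
    and "(\<integral>n. real n \<partial>measure_pmf (poisson_pmf rate)) = rate"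
proof -
  have s0: "(\<lambda>n. rate ^ n / fact n) sums exp rate"
    using exp_converges[of rate] by (simp add: divide_inverse mult.commute)
  have eq: "(\<lambda>n. pmf (poisson_pmf rate) (Suc n) * real (Suc n)) = (\<lambda>n. rate * exp (-rate) * (rate ^ n / fact n))"
  proof
    fix n
    have "pmf (poisson_pmf rate) (Suc n) * real (Suc n) = rate ^ Suc n / (real (Suc n) * fact n) * exp (- rate) * real (Suc n)"
      using r by (simp add: fact_Suc del: of_nat_Suc)
    also have "\<dots> = rate * exp (-rate) * (rate ^ n / fact n)"
      by (simp del: of_nat_Suc)
    finally show "pmf (poisson_pmf rate) (Suc n) * real (Suc n) = rate * exp (-rate) * (rate ^ n / fact n)" .
  qed
  have "(\<lambda>n. pmf (poisson_pmf rate) (Suc n) * real (Suc n)) sums (rate * exp (-rate) * exp rate)"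
    unfolding eq by (intro sums_mult s0)
  then have s: "(\<lambda>n. pmf (poisson_pmf rate) n * real n) sums rate"
    by (subst (asm) sums_Suc_iff) (simp add: exp_minus field_simps)
  have i: "integrable (count_space UNIV) (\<lambda>n. pmf (poisson_pmf rate) n *\<^sub>R real n)"
    using s by (subst integrable_count_space_nat_iff) (auto simp: sums_iff)
  show "integrable (measure_pmf (poisson_pmf rate)) (\<lambda>n. real n)"
    unfolding measure_pmf_eq_density
    using i by (subst integrable_density) auto
  show "(\<integral>n. real n \<partial>measure_pmf (poisson_pmf rate)) = rate"
    unfolding measure_pmf_eq_density
    using i s by (subst integral_density) (auto simp: integral_count_space_nat sums_iff)
qed

lemma campbell:
  fixes f :: "real^2 \<Rightarrow> 'b::{banach,second_countable_topology}"
  assumes B: "B \<in> sets lborel" "emeasure lborel B \<noteq> 0" "emeasure lborel B \<noteq> \<infinity>"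
    and k: "kappa > 0"
    and f[measurable]: "f \<in> borel_measurable borel" and bnd: "\<And>p. norm (f p) \<le> C"
  shows "ppp_expect kappa B f = kappa *\<^sub>R (\<integral>p. indicator B p *\<^sub>R f p \<partial>lborel)"
proof -
  define U where "U = uniform_measure lborel B"
  have PU: "prob_space U" unfolding U_def using B by (intro prob_space_uniform_measure) auto
  have sU[simp]: "sets U = sets borel" "space U = UNIV" unfolding U_def by auto
  have fU[measurable]: "f \<in> borel_measurable U" using f by (simp add: measurable_def)
  have iU: "integrable U f"
    using PU fU bnd by (intro finite_measure.integrable_const_bound[where B=C]) (auto simp: prob_space_def)
  have inner: "(\<integral>\<omega>. (\<Sum>i<n. f (\<omega> i)) \<partial>(PiM {..<n} (\<lambda>_. U))) = real n *\<^sub>R (\<integral>p. f p \<partial>U)" for n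
  proof -
    have comp: "distr (PiM {..<n} (\<lambda>_. U)) U (\<lambda>\<omega>. \<omega> i) = U" if "i \<in> {..<n}" for i
      using distr_PiM_component[of "{..<n}" "\<lambda>_. U" i] PU that by auto
    have m: "(\<lambda>\<omega>. \<omega> i) \<in> measurable (PiM {..<n} (\<lambda>_. U)) U" if "i \<in> {..<n}" for i
      using that by (rule measurable_component_singleton)
    have ii: "integrable (PiM {..<n} (\<lambda>_. U)) (\<lambda>\<omega>. f (\<omega> i))" if "i \<in> {..<n}" for i
      using integrable_distr_eq[OF m[OF that] fU] comp[OF that] iU by simp
    have "(\<integral>\<omega>. (\<Sum>i<n. f (\<omega> i)) \<partial>(PiM {..<n} (\<lambda>_. U))) = (\<Sum>i<n. \<integral>\<omega>. f (\<omega> i) \<partial>(PiM {..<n} (\<lambda>_. U)))"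
      using ii by (rule Bochner_Integration.integral_sum)
    also have "\<dots> = (\<Sum>i<n. \<integral>p. f p \<partial>U)"
      using integral_distr[OF m fU] comp by (intro sum.cong) auto
    finally show ?thesis by (simp add: sum_constant_scaleR)
  qed
  have mB: "measure lborel B > 0" using B
    by (simp add: emeasure_eq_ennreal_measure measure_nonneg order_less_le)
  have uni: "(\<integral>p. f p \<partial>U) = (1 / measure lborel B) *\<^sub>R (\<integral>p. indicator B p *\<^sub>R f p \<partial>lborel)"
  proof -
    have h1: "1 / ennreal x = ennreal (1 / x)" if "x > 0" for x :: real
      using that by (metis divide_ennreal ennreal_1 zero_le_one)
    have "U = density lborel (\<lambda>x. ennreal (indicator B x / measure lborel B))"
      unfolding U_def uniform_measure_def using B mB
      by (intro density_cong) (auto simp: emeasure_eq_ennreal_measure divide_ennreal indicator_def h1)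
    then have "(\<integral>p. f p \<partial>U) = (\<integral>p. (indicator B p / measure lborel B) *\<^sub>R f p \<partial>lborel)"
      using B by (simp add: integral_density)
    also have "\<dots> = (\<integral>p. (1 / measure lborel B) *\<^sub>R (indicator B p *\<^sub>R f p) \<partial>lborel)"
      by (intro Bochner_Integration.integral_cong) auto
    finally show ?thesis by (simp only: Bochner_Integration.integral_scaleR_right)
  qed
  have "ppp_expect kappa B f = (\<integral>n. real n *\<^sub>R (\<integral>p. f p \<partial>U) \<partial>measure_pmf (poisson_pmf (kappa * measure lborel B)))"
    unfolding ppp_expect_def U_def[symmetric] inner ..
  also have "\<dots> = (kappa * measure lborel B) *\<^sub>R (\<integral>p. f p \<partial>U)"
    using poisson_mean[of "kappa * measure lborel B"] k mB by (subst Bochner_Integration.integral_scaleR_left) auto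
  also have "\<dots> = kappa *\<^sub>R (\<integral>p. indicator B p *\<^sub>R f p \<partial>lborel)"
    using mB by (simp add: uni)
  finally show ?thesis .
qed

definition hh :: "real^2 \<Rightarrow> real^2 \<Rightarrow> real^2^2" where
  "hh u d = ((d \<bullet> u)\<^sup>2 / norm d ^ 8) *\<^sub>R ((norm d)\<^sup>2 *\<^sub>R mat 1 - outer d d)"

definition gg :: "real \<Rightarrow> real \<Rightarrow> real^2 \<Rightarrow> real^2 \<Rightarrow> real^2^2" where
  "gg r0 R u d = (if r0 \<le> norm d \<and> norm d \<le> R then hh u d else 0)"

lemma cont_outer: "continuous_on S (\<lambda>d::real^2. outer d d)"
  unfolding outer_def
  by (intro continuous_on_vec_lambda continuous_intros)

lemma cont_hh: "0 \<notin> S \<Longrightarrow> continuous_on S (hh u)"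
  unfolding hh_def
  by (intro continuous_intros cont_outer) auto

lemma gg_meas: "0 < r0 \<Longrightarrow> gg r0 R u \<in> borel_measurable borel"
proof -
  assume r0: "0 < r0"
  let ?K = "{d::real^2. r0 \<le> norm d \<and> norm d \<le> R}"
  have "closed ?K" by (intro closed_Collect_conj closed_Collect_le continuous_intros)
  moreover have "continuous_on ?K (hh u)" using r0 by (intro cont_hh) auto
  ultimately have "(\<lambda>d. indicator ?K d *\<^sub>R hh u d) \<in> borel_measurable borel"
    by (intro borel_measurable_continuous_on_indicator) auto
  moreover have "(\<lambda>d. indicator ?K d *\<^sub>R hh u d) = gg r0 R u"
    unfolding gg_def by (rule ext) (simp add: indicator_def)
  ultimately show ?thesis by metis
qed

lemma gg_bound: "0 < r0 \<Longrightarrow> \<exists>C. \<forall>d. norm (gg r0 R u d) \<le> C"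
proof -
  assume r0: "0 < r0"
  let ?K = "{d::real^2. r0 \<le> norm d \<and> norm d \<le> R}"
  have "compact ?K"
  unfolding compact_eq_bounded_closed proof
    show "closed ?K" by (intro closed_Collect_conj closed_Collect_le continuous_intros)
    show "bounded ?K" by (rule boundedI[of _ R]) auto
  qed
  moreover have "continuous_on ?K (hh u)" using r0 by (intro cont_hh) auto
  ultimately have "compact (hh u ` ?K)" using compact_continuous_image by blast
  then have "bounded (hh u ` ?K)" by (rule compact_imp_bounded)
  then obtain C where C: "\<And>y. y \<in> hh u ` ?K \<Longrightarrow> norm y \<le> C"
    unfolding bounded_iff by blast
  have "norm (gg r0 R u d) \<le> max 0 C" for d
  proof (cases "r0 \<le> norm d \<and> norm d \<le> R")
    case True
    then have "norm (hh u d) \<le> C" using C by blast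
    then show ?thesis using True by (simp add: gg_def)
  next
    case False
    show ?thesis unfolding gg_def if_not_P[OF False] by simp
  qed
  then show ?thesis by blast
qed

lemma gg_integrable: "0 < r0 \<Longrightarrow> integrable lborel (gg r0 R u)"
proof -
  assume r0: "0 < r0"
  obtain C where C: "\<And>d. norm (gg r0 R u d) \<le> C" using gg_bound[OF r0] by blast
  show ?thesis
  proof (rule integrableI_bounded_set[where A="cball 0 R" and B=C])
    show "gg r0 R u \<in> borel_measurable lborel" using gg_meas[OF r0] by simp
    show "emeasure lborel (cball (0::real^2) R) < \<infinity>" by (intro emeasure_bounded_finite) simp
    show "AE x in lborel. x \<in> cball 0 R \<longrightarrow> norm (gg r0 R u x) \<le> C"
      by (intro AE_I2) (use C in blast)
    show "AE x in lborel. x \<notin> cball 0 R \<longrightarrow> gg r0 R u x = 0"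
      by (intro AE_I2) (auto simp: gg_def)
  qed simp
qed

lemma transl:
  fixes g :: "real^2 \<Rightarrow> 'b::{banach,second_countable_topology}"
  assumes g[measurable]: "g \<in> borel_measurable borel"
  shows "(\<integral>p. g (c - p) \<partial>lborel) = (\<integral>d. g d \<partial>lborel)"
proof -
  have L: "lborel = density (distr lborel borel (\<lambda>x. c + (-1) *\<^sub>R x)) (\<lambda>_. \<bar>-1::real\<bar> ^ DIM(real^2))"
    by (rule lborel_affine) simp
  have "(\<integral>d. g d \<partial>lborel) = (\<integral>d. g d \<partial>density (distr lborel borel (\<lambda>x. c + (-1) *\<^sub>R x)) (\<lambda>_. 1))"
    by (subst L) simp
  also have "\<dots> = (\<integral>d. g d \<partial>distr lborel borel (\<lambda>x. c + (-1) *\<^sub>R x))"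
    by (simp add: density_1)
  also have "\<dots> = (\<integral>p. g (c + (-1) *\<^sub>R p) \<partial>lborel)"
    by (rule integral_distr) auto
  finally show ?thesis by simp
qed

lemma per_t:
  fixes c v :: "real^2"
  assumes v: "v \<noteq> 0" and k: "kappa > 0" and r0: "0 < r0" and R: "r0 < R"
  shows "ppp_expect kappa (cball c R)
        (\<lambda>p. let d = c - p in
              if r0 \<le> norm d \<and> norm d \<le> R
              then ((real t)\<^sup>2 * (comp_along v d)\<^sup>2 / norm d ^ 8) *\<^sub>R
                     ((norm d)\<^sup>2 *\<^sub>R mat 1 - outer d d)
              else 0)
     = (kappa * (real t)\<^sup>2) *\<^sub>R (\<integral>d. gg r0 R (v /\<^sub>R norm v) d \<partial>lborel)"
proof -
  define u where "u = v /\<^sub>R norm v"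
  have gm[measurable]: "gg r0 R u \<in> borel_measurable borel" using gg_meas[OF r0] .
  obtain C where C: "\<And>d. norm (gg r0 R u d) \<le> C" using gg_bound[OF r0] by blast
  have feq: "(\<lambda>p. let d = c - p in
              if r0 \<le> norm d \<and> norm d \<le> R
              then ((real t)\<^sup>2 * (comp_along v d)\<^sup>2 / norm d ^ 8) *\<^sub>R
                     ((norm d)\<^sup>2 *\<^sub>R mat 1 - outer d d)
              else 0) = (\<lambda>p. (real t)\<^sup>2 *\<^sub>R gg r0 R u (c - p))"
  proof (rule ext)
    fix p
    have ca: "comp_along v d = d \<bullet> u" for d
      unfolding comp_along_def u_def by (simp add: divide_inverse mult.commute)
    show "(let d = c - p in
              if r0 \<le> norm d \<and> norm d \<le> R
              then ((real t)\<^sup>2 * (comp_along v d)\<^sup>2 / norm d ^ 8) *\<^sub>R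
                     ((norm d)\<^sup>2 *\<^sub>R mat 1 - outer d d)
              else 0) = (real t)\<^sup>2 *\<^sub>R gg r0 R u (c - p)"
      unfolding Let_def gg_def hh_def ca by simp
  qed
  have B: "cball c R \<in> sets lborel" "emeasure lborel (cball c R) \<noteq> 0" "emeasure lborel (cball c R) \<noteq> \<infinity>"
    using content_cball_pos[of R c] r0 R emeasure_lborel_cball_finite[of c R]
    by (auto simp: measure_def)
  have "ppp_expect kappa (cball c R) (\<lambda>p. (real t)\<^sup>2 *\<^sub>R gg r0 R u (c - p))
      = kappa *\<^sub>R (\<integral>p. indicator (cball c R) p *\<^sub>R ((real t)\<^sup>2 *\<^sub>R gg r0 R u (c - p)) \<partial>lborel)"
  proof (rule campbell[OF B k, where C="(real t)\<^sup>2 * C"])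
    show "(\<lambda>p. (real t)\<^sup>2 *\<^sub>R gg r0 R u (c - p)) \<in> borel_measurable borel" by measurable
    show "norm ((real t)\<^sup>2 *\<^sub>R gg r0 R u (c - p)) \<le> (real t)\<^sup>2 * C" for p
      using C[of "c - p"] by (simp add: mult_left_mono)
  qed
  also have "(\<lambda>p. indicator (cball c R) p *\<^sub>R ((real t)\<^sup>2 *\<^sub>R gg r0 R u (c - p))) = (\<lambda>p. (real t)\<^sup>2 *\<^sub>R gg r0 R u (c - p))"
  proof (rule ext)
    fix p
    show "indicator (cball c R) p *\<^sub>R ((real t)\<^sup>2 *\<^sub>R gg r0 R u (c - p)) = (real t)\<^sup>2 *\<^sub>R gg r0 R u (c - p)"
    proof (cases "p \<in> cball c R")
      case False
      then have nn: "\<not> (r0 \<le> norm (c - p) \<and> norm (c - p) \<le> R)" by (auto simp: dist_norm)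
      show ?thesis unfolding gg_def if_not_P[OF nn] by simp
    qed simp
  qed
  also have "(\<integral>p. (real t)\<^sup>2 *\<^sub>R gg r0 R u (c - p) \<partial>lborel) = (real t)\<^sup>2 *\<^sub>R (\<integral>d. gg r0 R u d \<partial>lborel)"
    using transl[OF gm, of c] by simp
  finally show ?thesis unfolding feq u_def by simp
qed

definition vp :: "real \<times> real \<Rightarrow> real^2" where "vp z = vector [fst z, snd z]"
definition pv :: "real^2 \<Rightarrow> real \<times> real" where "pv p = (p$1, p$2)"

lemma vp_pv[simp]: "vp (pv p) = p"
  unfolding vp_def pv_def by (simp add: vec_eq_iff forall_2)
lemma pv_vp[simp]: "pv (vp z) = z"
  unfolding vp_def pv_def by (cases z) simp

lemma mem_cbox2: "(p::real^2) \<in> cbox a b \<longleftrightarrow> a$1 \<le> p$1 \<and> p$1 \<le> b$1 \<and> a$2 \<le> p$2 \<and> p$2 \<le> b$2"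
  by (auto simp: mem_box_cart forall_2)

lemma vp_image: "vp ` cbox u v = cbox (vp u) (vp v)"
proof -
  obtain u1 u2 v1 v2 where uv: "u = (u1,u2)" "v = (v1,v2)" by (cases u, cases v) auto
  show ?thesis
  proof (intro equalityI subsetI)
    fix y assume "y \<in> vp ` cbox u v"
    then show "y \<in> cbox (vp u) (vp v)"
      unfolding uv by (auto simp: mem_cbox2 vp_def cbox_Pair_eq)
  next
    fix y assume y: "y \<in> cbox (vp u) (vp v)"
    have "pv y \<in> cbox u v" using y unfolding uv by (auto simp: mem_cbox2 pv_def vp_def cbox_Pair_eq)
    then show "y \<in> vp ` cbox u v" by (metis vp_pv image_eqI)
  qed
qed

lemma pv_image: "pv ` cbox u v = cbox (pv u) (pv v)"
proof (intro equalityI subsetI)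
  fix y assume "y \<in> pv ` cbox u v"
  then show "y \<in> cbox (pv u) (pv v)"
    by (auto simp: mem_cbox2 pv_def cbox_Pair_eq)
next
  fix y assume y: "y \<in> cbox (pv u) (pv v)"
  obtain y1 y2 where yy: "y = (y1,y2)" by (cases y)
  have "vp y \<in> cbox u v" using y unfolding yy by (auto simp: mem_cbox2 pv_def vp_def cbox_Pair_eq)
  then show "y \<in> pv ` cbox u v" by (metis pv_vp image_eqI)
qed

lemma vp_content: "Henstock_Kurzweil_Integration.content (vp ` cbox u v) = 1 * Henstock_Kurzweil_Integration.content (cbox u v)"
proof -
  obtain u1 u2 v1 v2 where uv: "u = (u1,u2)" "v = (v1,v2)" by (cases u, cases v) auto
  show ?thesis
  proof (cases "cbox (vp u) (vp v) = {}")
    case True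
    then have "cbox u v = {}" using vp_image[of u v] by simp
    then show ?thesis using True vp_image[of u v] by simp
  next
    case False
    then have ne: "u1 \<le> v1" "u2 \<le> v2" unfolding uv
      by (auto simp: mem_cbox2 vp_def dest!: ex_in_conv[THEN iffD2])
    have "Henstock_Kurzweil_Integration.content (cbox (vp u) (vp v)) = (v1 - u1) * (v2 - u2)"
      using False unfolding uv by (simp add: content_cbox_cart UNIV_2 vp_def)
    moreover have "Henstock_Kurzweil_Integration.content (cbox u v) = (v1 - u1) * (v2 - u2)"
      unfolding uv content_Pair using ne by simp
    ultimately show ?thesis by (simp add: vp_image)
  qed
qed

lemma linear_vp: "linear vp"
  by (rule linearI) (auto simp: vp_def vec_eq_iff forall_2)

lemma cont_vp: "continuous (at x) vp"
  by (intro linear_continuous_at) (simp add: linear_conv_bounded_linear[symmetric] linear_vp)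

lemma linear_pv: "linear pv"
  by (rule linearI) (auto simp: pv_def)

lemma cont_pv: "continuous (at x) pv"
  by (intro linear_continuous_at) (simp add: linear_conv_bounded_linear[symmetric] linear_pv)

lemma fubini2:
  fixes F :: "real^2 \<Rightarrow> real"
  assumes "continuous_on (cbox a b) F"
  shows "integral (cbox a b) F = integral {a$1..b$1} (\<lambda>x. integral {a$2..b$2} (\<lambda>y. F (vector [x,y])))"
proof -
  have i: "(F has_integral integral (cbox a b) F) (cbox a b)"
    using assms by (intro integrable_integral integrable_continuous)
  have "((\<lambda>x. F (vp x)) has_integral (1 / 1) *\<^sub>R integral (cbox a b) F) (pv ` cbox a b)"
  proof (rule has_integral_twiddle[where h=pv, OF _ _ _ _ _ _ _ i])
    show "\<exists>w z. vp ` cbox u v = cbox w z" for u v using vp_image by blast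
    show "\<exists>w z. pv ` cbox u v = cbox w z" for u v using pv_image by blast
    show "Henstock_Kurzweil_Integration.content (vp ` cbox u v) = 1 * Henstock_Kurzweil_Integration.content (cbox u v)" for u v
      by (rule vp_content)
  qed (auto simp: cont_vp)
  then have "integral (cbox (pv a) (pv b)) (\<lambda>x. F (vp x)) = integral (cbox a b) F"
    by (simp add: pv_image integral_unique)
  moreover have "continuous_on (cbox (pv a) (pv b)) (\<lambda>x. F (vp x))"
  proof -
    have "vp ` cbox (pv a) (pv b) = cbox a b" by (simp add: vp_image)
    then show ?thesis
      by (intro continuous_on_compose2[OF assms] continuous_at_imp_continuous_on ballI cont_vp) auto
  qed
  ultimately show ?thesis
    unfolding pv_def using integral_prod_continuous[of "a$1" "a$2" "b$1" "b$2" "\<lambda>x. F (vp x)"]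
    by (simp add: vp_def cbox_interval)
qed

definition pol :: "real^2 \<Rightarrow> real^2" where
  "pol p = (p$1 * cos (p$2)) *\<^sub>R axis 1 1 + (p$1 * sin (p$2)) *\<^sub>R axis 2 1"

definition pol' :: "real^2 \<Rightarrow> real^2 \<Rightarrow> real^2" where
  "pol' p h = (h$1 * cos (p$2) - p$1 * sin (p$2) * h$2) *\<^sub>R axis 1 1 + (h$1 * sin (p$2) + p$1 * cos (p$2) * h$2) *\<^sub>R axis 2 1"

lemma pol_nth[simp]: "pol p $ 1 = p$1 * cos (p$2)" "pol p $ 2 = p$1 * sin (p$2)"
  by (simp_all add: pol_def axis_def)

lemma pol_deriv: "(pol has_derivative pol' p) (at p within S)"
  unfolding pol_def[abs_def] pol'_def[abs_def]
  apply (rule derivative_eq_intros refl bounded_linear.has_derivative[OF bounded_linear_vec_nth] | simp)+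
  apply (simp add: fun_eq_iff algebra_simps)
  done

lemma det_pol: "det (matrix (pol' p)) = p$1"
  apply (simp add: det_2 matrix_def pol'_def axis_def algebra_simps power2_eq_square[symmetric])
  apply (simp only: distrib_left[symmetric] sin_cos_squared_add2 mult_1_right)
  done

lemma norm2: "norm (x::real^2) = sqrt ((x$1)\<^sup>2 + (x$2)\<^sup>2)"
  by (simp add: norm_vec_def L2_set_def sum_2)

lemma norm_pol: "norm (pol p) = \<bar>p$1\<bar>"
proof -
  have "(p$1 * cos (p$2))\<^sup>2 + (p$1 * sin (p$2))\<^sup>2 = (p$1)\<^sup>2"
    by (simp add: power_mult_distrib distrib_left[symmetric])
  then show ?thesis by (simp add: norm2)
qed

lemma pol_complex: "of_real (p$1) * exp (\<i> * of_real (p$2)) = Complex (pol p $ 1) (pol p $ 2)"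
  by (simp add: complex_eq_iff Re_exp Im_exp)

definition SS :: "real \<Rightarrow> real \<Rightarrow> (real^2) set" where
  "SS r0 R = {p. r0 \<le> p$1 \<and> p$1 \<le> R \<and> 0 \<le> p$2 \<and> p$2 < 2*pi}"

definition KK :: "real \<Rightarrow> real \<Rightarrow> (real^2) set" where
  "KK r0 R = {d. r0 \<le> norm d \<and> norm d \<le> R}"

lemma inj_pol: "0 < r0 \<Longrightarrow> inj_on pol (SS r0 R)"
proof (rule inj_onI)
  fix p q assume r0: "0 < r0" and p: "p \<in> SS r0 R" and q: "q \<in> SS r0 R" and e: "pol p = pol q"
  have "norm (pol p) = norm (pol q)" using e by simp
  then have 1: "p$1 = q$1" using p q r0 by (simp add: norm_pol SS_def)
  have "Arg2pi (Complex (pol p $ 1) (pol p $ 2)) = p$2"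
    using p r0 by (intro Arg2pi_unique[OF pol_complex]) (auto simp: SS_def)
  moreover have "Arg2pi (Complex (pol q $ 1) (pol q $ 2)) = q$2"
    using q r0 by (intro Arg2pi_unique[OF pol_complex]) (auto simp: SS_def)
  ultimately have 2: "p$2 = q$2" using e by simp
  show "p = q" using 1 2 by (simp add: vec_eq_iff forall_2)
qed

lemma image_pol: "0 < r0 \<Longrightarrow> pol ` SS r0 R = KK r0 R"
proof (intro equalityI subsetI)
  fix d assume r0: "0 < r0" and "d \<in> pol ` SS r0 R"
  then obtain p where p: "p \<in> SS r0 R" "d = pol p" by auto
  then show "d \<in> KK r0 R" using r0 by (auto simp: KK_def SS_def norm_pol)
next
  fix d assume r0: "0 < r0" and d: "d \<in> KK r0 R"
  define z where "z = Complex (d$1) (d$2)"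
  define p where "p = (vector [norm d, Arg2pi z] :: real^2)"
  have cm: "cmod z = norm d" by (simp add: z_def cmod_def norm2)
  have A: "0 \<le> Arg2pi z \<and> Arg2pi z < 2*pi \<and> z = of_real (cmod z) * exp (\<i> * of_real (Arg2pi z))"
    using Arg2pi[of z] by (simp add: is_Arg_def)
  then have e: "z = of_real (cmod z) * exp (\<i> * of_real (Arg2pi z))" by blast
  have re: "Re z = cmod z * cos (Arg2pi z)" using arg_cong[OF e, of Re] by (simp add: Re_exp)
  have im: "Im z = cmod z * sin (Arg2pi z)" using arg_cong[OF e, of Im] by (simp add: Im_exp)
  have "pol p = d"
    using re im cm by (simp add: vec_eq_iff forall_2 p_def z_def)
  moreover have "p \<in> SS r0 R" using d A by (simp add: SS_def p_def KK_def)
  ultimately show "d \<in> pol ` SS r0 R" by blast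
qed

lemma SS_lebesgue: "SS r0 R \<in> sets lebesgue"
proof -
  have "SS r0 R \<in> sets borel"
    unfolding SS_def by measurable
  then show ?thesis by simp
qed

lemma polar:
  fixes phi :: "real^2 \<Rightarrow> real"
  assumes r0: "0 < r0" "r0 \<le> R" and cphi: "continuous_on (KK r0 R) phi"
  shows "(phi has_integral integral {r0..R} (\<lambda>r. integral {0..2*pi} (\<lambda>\<theta>. r * phi (pol (vector [r, \<theta>]))))) (KK r0 R)"
proof -
  define Bx where "Bx = cbox (vector [r0, 0]) (vector [R, 2*pi] :: real^2)"
  define F where "F d = phi d *\<^sub>R (1::real^1)" for d
  define D where "D p = \<bar>det (matrix (pol' p))\<bar> *\<^sub>R F (pol p)" for p
  define Psi where "Psi p = \<bar>p$1\<bar> * phi (pol p)" for p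
  have DPsi: "D p = Psi p *\<^sub>R 1" for p by (simp add: D_def F_def Psi_def det_pol)
  have SB: "SS r0 R \<subseteq> Bx" by (auto simp: SS_def Bx_def mem_cbox2)
  have polB: "pol ` Bx \<subseteq> KK r0 R"
    using r0 by (auto simp: Bx_def mem_cbox2 KK_def norm_pol)
  have cpol: "continuous_on Bx pol"
    by (rule has_derivative_continuous_on[OF pol_deriv])
  have cPsi: "continuous_on Bx Psi"
    unfolding Psi_def
    by (intro continuous_intros continuous_on_compose2[OF cphi cpol polB])
  have cD: "continuous_on Bx D"
    unfolding DPsi by (intro continuous_intros cPsi)
  have absB: "D absolutely_integrable_on Bx"
    unfolding Bx_def by (rule absolutely_integrable_continuous) (use cD Bx_def in simp)
  have absS: "D absolutely_integrable_on SS r0 R"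
    by (rule set_integrable_subset[OF absB SS_lebesgue SB])
  have CV: "F absolutely_integrable_on pol ` SS r0 R \<and> integral (pol ` SS r0 R) F = integral (SS r0 R) D"
    using has_absolute_integral_change_of_variables[OF SS_lebesgue pol_deriv inj_pol[OF r0(1)], where f=F and b="integral (SS r0 R) D"]
      absS unfolding D_def by blast
  then have hF: "(F has_integral integral (SS r0 R) D) (KK r0 R)"
    using set_lebesgue_integral_eq_integral(1)[of "KK r0 R" F] image_pol[OF r0(1)]
    by (metis integrable_integral)
  have "integral (SS r0 R) D = integral Bx D"
  proof (rule integral_spike_set)
    have "{x \<in> SS r0 R - Bx. D x \<noteq> 0} = {}" using SB by blast
    then show "negligible {x \<in> SS r0 R - Bx. D x \<noteq> 0}" by (metis negligible_empty)
    have "{x \<in> Bx - SS r0 R. D x \<noteq> 0} \<subseteq> {x. x \<bullet> axis 2 1 = 2*pi}"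
      by (auto simp: Bx_def SS_def mem_cbox2 inner_axis)
    moreover have "negligible {x::real^2. x \<bullet> axis 2 1 = 2*pi}"
      by (rule negligible_standard_hyperplane) (simp add: Basis_vec_def, blast)
    ultimately show "negligible {x \<in> Bx - SS r0 R. D x \<noteq> 0}" by (rule negligible_subset[rotated])
  qed
  also have "integral Bx D $ 1 = integral Bx Psi"
  proof -
    have "D integrable_on Bx" using absB set_lebesgue_integral_eq_integral(1) by blast
    then have "integral Bx ((\<lambda>y. y $ 1) \<circ> D) = integral Bx D $ 1"
      by (rule integral_linear) (rule bounded_linear_vec_nth)
    then show ?thesis by (simp add: o_def DPsi)
  qed
  also have "integral Bx Psi = integral {r0..R} (\<lambda>r. integral {0..2*pi} (\<lambda>\<theta>. r * phi (pol (vector [r, \<theta>]))))"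
    unfolding Bx_def fubini2[OF cPsi[unfolded Bx_def]] vector_2
    by (intro integral_cong) (use r0 in \<open>simp add: Psi_def\<close>)
  finally have "(((\<lambda>y. y $ 1) \<circ> F) has_integral integral {r0..R} (\<lambda>r. integral {0..2*pi} (\<lambda>\<theta>. r * phi (pol (vector [r, \<theta>]))))) (KK r0 R)"
    using has_integral_linear[OF hF bounded_linear_vec_nth[of 1]] by simp
  then show ?thesis by (simp add: o_def F_def)
qed

lemma ftc_real:
  fixes F f :: "real \<Rightarrow> real"
  assumes "a \<le> b" and "\<And>x. x \<in> {a..b} \<Longrightarrow> (F has_real_derivative f x) (at x)"
  shows "(f has_integral (F b - F a)) {a..b}"
  using assms
  by (intro fundamental_theorem_of_calculus)
     (auto simp: has_real_derivative_iff_has_vector_derivative[symmetric] intro: has_field_derivative_at_within)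

lemma ang11: "((\<lambda>t. (a * cos t + b * sin t)\<^sup>2 * (sin t)\<^sup>2) has_integral pi * (a\<^sup>2 + 3 * b\<^sup>2) / 4) {0..2*pi}"
proof -
  define F where "F t = a\<^sup>2 * (t/8 + sin t * cos t / 8 - sin t * cos t ^ 3 / 4) + 2*a*b * (sin t ^ 4 / 4)
     + b\<^sup>2 * (3*t/8 - 5 * sin t * cos t / 8 + sin t * cos t ^ 3 / 4)" for t
  have "(F has_real_derivative (a * cos t + b * sin t)\<^sup>2 * (sin t)\<^sup>2) (at t)" for t
    unfolding F_def
    apply (rule derivative_eq_intros refl | simp)+
    using sin_cos_squared_add[of t] by algebra
  then have "((\<lambda>t. (a * cos t + b * sin t)\<^sup>2 * (sin t)\<^sup>2) has_integral (F (2*pi) - F 0)) {0..2*pi}"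
    by (intro ftc_real) auto
  moreover have "F (2*pi) - F 0 = pi * (a\<^sup>2 + 3 * b\<^sup>2) / 4" by (simp add: F_def algebra_simps)
  ultimately show ?thesis by simp
qed

lemma ang22: "((\<lambda>t. (a * cos t + b * sin t)\<^sup>2 * (cos t)\<^sup>2) has_integral pi * (3 * a\<^sup>2 + b\<^sup>2) / 4) {0..2*pi}"
proof -
  define F where "F t = a\<^sup>2 * (3*t/8 + 3 * sin t * cos t / 8 + sin t * cos t ^ 3 / 4) + 2*a*b * (- (cos t ^ 4) / 4)
     + b\<^sup>2 * (t/8 + sin t * cos t / 8 - sin t * cos t ^ 3 / 4)" for t
  have "(F has_real_derivative (a * cos t + b * sin t)\<^sup>2 * (cos t)\<^sup>2) (at t)" for t
    unfolding F_def
    apply (rule derivative_eq_intros refl | simp)+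
    using sin_cos_squared_add[of t] by algebra
  then have "((\<lambda>t. (a * cos t + b * sin t)\<^sup>2 * (cos t)\<^sup>2) has_integral (F (2*pi) - F 0)) {0..2*pi}"
    by (intro ftc_real) auto
  moreover have "F (2*pi) - F 0 = pi * (3 * a\<^sup>2 + b\<^sup>2) / 4" by (simp add: F_def algebra_simps)
  ultimately show ?thesis by simp
qed

lemma ang12: "((\<lambda>t. - ((a * cos t + b * sin t)\<^sup>2 * (cos t * sin t))) has_integral - (pi * a * b / 2)) {0..2*pi}"
proof -
  define F where "F t = - (a\<^sup>2 * (- (cos t ^ 4) / 4) + 2*a*b * (t/8 + sin t * cos t / 8 - sin t * cos t ^ 3 / 4)
     + b\<^sup>2 * (sin t ^ 4 / 4))" for t
  have "(F has_real_derivative - ((a * cos t + b * sin t)\<^sup>2 * (cos t * sin t))) (at t)" for t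
    unfolding F_def
    apply (rule derivative_eq_intros refl | simp)+
    using sin_cos_squared_add[of t] by algebra
  then have "((\<lambda>t. - ((a * cos t + b * sin t)\<^sup>2 * (cos t * sin t))) has_integral (F (2*pi) - F 0)) {0..2*pi}"
    by (intro ftc_real) auto
  moreover have "F (2*pi) - F 0 = - (pi * a * b / 2)" by (simp add: F_def algebra_simps)
  ultimately show ?thesis by simp
qed

lemma radial:
  fixes I :: real
  assumes "0 < r0" "r0 \<le> R"
  shows "((\<lambda>r. I / r ^ 3) has_integral I * (1 / r0\<^sup>2 - 1 / R\<^sup>2) / 2) {r0..R}"
proof -
  define F where "F r = - I / (2 * r\<^sup>2)" for r :: real
  have "(F has_real_derivative I / r ^ 3) (at r)" if "r \<in> {r0..R}" for r
  proof -
    have "r \<noteq> 0" using that assms by auto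
    then show ?thesis unfolding F_def
      by (auto intro!: derivative_eq_intros simp: field_simps power2_eq_square power3_eq_cube)
  qed
  then have "((\<lambda>r. I / r ^ 3) has_integral (F R - F r0)) {r0..R}"
    using assms by (intro ftc_real) auto
  moreover have "F R - F r0 = I * (1 / r0\<^sup>2 - 1 / R\<^sup>2) / 2" using assms
    by (simp add: F_def field_simps)
  ultimately show ?thesis by simp
qed

lemma hh_pol:
  fixes r \<theta> :: real
  assumes r: "r > 0"
  defines "c \<equiv> cos \<theta>" and "s \<equiv> sin \<theta>"
  shows "r * hh u (pol (vector [r, \<theta>])) $ 1 $ 1 = (u$1 * c + u$2 * s)\<^sup>2 * s\<^sup>2 / r ^ 3"
    and "r * hh u (pol (vector [r, \<theta>])) $ 2 $ 2 = (u$1 * c + u$2 * s)\<^sup>2 * c\<^sup>2 / r ^ 3"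
    and "r * hh u (pol (vector [r, \<theta>])) $ 1 $ 2 = - ((u$1 * c + u$2 * s)\<^sup>2 * (c * s)) / r ^ 3"
    and "r * hh u (pol (vector [r, \<theta>])) $ 2 $ 1 = - ((u$1 * c + u$2 * s)\<^sup>2 * (c * s)) / r ^ 3"
proof -
  have n: "norm (pol (vector [r, \<theta>])) = r" using r by (simp add: norm_pol)
  have sc: "s\<^sup>2 + c\<^sup>2 = 1" unfolding s_def c_def by simp
  have ip: "pol (vector [r, \<theta>]) \<bullet> u = r * (u$1 * c + u$2 * s)"
    by (simp add: inner_vec_def sum_2 c_def s_def algebra_simps)
  have base: "hh u (pol (vector [r, \<theta>])) $ i $ j = (r * (u$1 * c + u$2 * s))\<^sup>2 / r ^ 8 *
      (r\<^sup>2 * (if i = j then 1 else 0) - pol (vector [r, \<theta>]) $ i * pol (vector [r, \<theta>]) $ j)" for i j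
    unfolding hh_def n ip by (simp add: outer_def mat_def)
  have d12: "(1::2) \<noteq> 2" by simp
  show "r * hh u (pol (vector [r, \<theta>])) $ 1 $ 1 = (u$1 * c + u$2 * s)\<^sup>2 * s\<^sup>2 / r ^ 3"
    unfolding base using r sc
    apply (simp add: c_def[symmetric] s_def[symmetric] field_simps)
    by algebra
  show "r * hh u (pol (vector [r, \<theta>])) $ 2 $ 2 = (u$1 * c + u$2 * s)\<^sup>2 * c\<^sup>2 / r ^ 3"
    unfolding base using r sc
    apply (simp add: c_def[symmetric] s_def[symmetric] field_simps)
    by algebra
  show "r * hh u (pol (vector [r, \<theta>])) $ 1 $ 2 = - ((u$1 * c + u$2 * s)\<^sup>2 * (c * s)) / r ^ 3"
    unfolding base using r sc d12
    apply (simp add: c_def[symmetric] s_def[symmetric] field_simps)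
    apply (intro disjI2)
    by (simp add: algebra_simps eval_nat_numeral)
  show "r * hh u (pol (vector [r, \<theta>])) $ 2 $ 1 = - ((u$1 * c + u$2 * s)\<^sup>2 * (c * s)) / r ^ 3"
    unfolding base using r sc d12
    apply (simp add: c_def[symmetric] s_def[symmetric] field_simps)
    apply (intro disjI2)
    by (simp add: algebra_simps eval_nat_numeral)
qed

lemma entry_integral:
  fixes P :: "real \<Rightarrow> real" and i j :: 2
  assumes r0: "0 < r0" "r0 < R"
    and hP: "(P has_integral I) {0..2*pi}"
    and eq: "\<And>r \<theta>. r > 0 \<Longrightarrow> r * hh u (pol (vector [r, \<theta>])) $ i $ j = P \<theta> / r ^ 3"
  shows "((\<lambda>d. hh u d $ i $ j) has_integral I * (1 / r0\<^sup>2 - 1 / R\<^sup>2) / 2) (KK r0 R)"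
proof -
  have c: "continuous_on (KK r0 R) (\<lambda>d. hh u d $ i $ j)"
  proof -
    have c1: "continuous_on (KK r0 R) (hh u)" using r0 by (intro cont_hh) (auto simp: KK_def)
    have c2: "continuous_on UNIV (\<lambda>M::real^2^2. M $ i $ j)"
      by (intro linear_continuous_on bounded_linear_compose[OF bounded_linear_vec_nth bounded_linear_vec_nth])
    show ?thesis using continuous_on_compose2[OF c2 c1] by simp
  qed
  have inner: "integral {0..2*pi} (\<lambda>\<theta>. r * hh u (pol (vector [r, \<theta>])) $ i $ j) = I / r ^ 3" if "r \<in> {r0..R}" for r
  proof -
    have "r > 0" using that r0 by auto
    then have "integral {0..2*pi} (\<lambda>\<theta>. r * hh u (pol (vector [r, \<theta>])) $ i $ j) = integral {0..2*pi} (\<lambda>\<theta>. P \<theta> / r ^ 3)"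
      by (intro integral_cong) (simp add: eq)
    also have "\<dots> = I / r ^ 3" using has_integral_divide[OF hP] by (rule integral_unique)
    finally show ?thesis .
  qed
  have P: "((\<lambda>d. hh u d $ i $ j) has_integral integral {r0..R} (\<lambda>r. integral {0..2*pi} (\<lambda>\<theta>. r * hh u (pol (vector [r, \<theta>])) $ i $ j))) (KK r0 R)"
    by (rule polar[OF r0(1) _ c]) (use r0 in simp)
  have "integral {r0..R} (\<lambda>r. integral {0..2*pi} (\<lambda>\<theta>. r * hh u (pol (vector [r, \<theta>])) $ i $ j))
      = integral {r0..R} (\<lambda>r. I / r ^ 3)"
    by (intro integral_cong inner)
  also have "\<dots> = I * (1 / r0\<^sup>2 - 1 / R\<^sup>2) / 2"
    using radial[of r0 R I] r0 by (intro integral_unique) auto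
  finally show ?thesis using P by (simp only:)
qed

lemma G_value:
  fixes u :: "real^2"
  assumes r0: "0 < r0" "r0 < R" and u: "norm u = 1"
  shows "(\<integral>d. gg r0 R u d \<partial>lborel) = (pi * (1 / r0\<^sup>2 - 1 / R\<^sup>2) / 8) *\<^sub>R (3 *\<^sub>R mat 1 - 2 *\<^sub>R outer u u)"
proof -
  define G where "G = (\<integral>d. gg r0 R u d \<partial>lborel)"
  define cc where "cc = 1 / r0\<^sup>2 - 1 / R\<^sup>2"
  have ab: "(u$1)\<^sup>2 + (u$2)\<^sup>2 = 1" using u by (simp add: norm2)
  have "(gg r0 R u has_integral G) UNIV"
    unfolding G_def by (rule has_integral_integral_lborel[OF gg_integrable[OF r0(1)]])
  moreover have "gg r0 R u = (\<lambda>d. if d \<in> KK r0 R then hh u d else 0)"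
    by (auto simp: fun_eq_iff gg_def KK_def)
  ultimately have hG: "(hh u has_integral G) (KK r0 R)"
    by (simp add: has_integral_restrict_UNIV)
  have ent: "((\<lambda>d. hh u d $ i $ j) has_integral G $ i $ j) (KK r0 R)" for i j
    using has_integral_linear[OF hG bounded_linear_compose[OF bounded_linear_vec_nth bounded_linear_vec_nth, of i j]]
    by (simp add: o_def)
  have g11: "G $ 1 $ 1 = pi * ((u$1)\<^sup>2 + 3 * (u$2)\<^sup>2) / 4 * cc / 2"
    using has_integral_unique[OF ent[of 1 1] entry_integral[OF r0 ang11[of "u$1" "u$2"]]] hh_pol(1)
    unfolding cc_def by simp
  have g22: "G $ 2 $ 2 = pi * (3 * (u$1)\<^sup>2 + (u$2)\<^sup>2) / 4 * cc / 2"
    using has_integral_unique[OF ent[of 2 2] entry_integral[OF r0 ang22[of "u$1" "u$2"]]] hh_pol(2)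
    unfolding cc_def by simp
  have g12: "G $ 1 $ 2 = - (pi * u$1 * u$2 / 2) * cc / 2"
    using has_integral_unique[OF ent[of 1 2] entry_integral[OF r0 ang12[of "u$1" "u$2"]]] hh_pol(3)
    unfolding cc_def by simp
  have g21: "G $ 2 $ 1 = - (pi * u$1 * u$2 / 2) * cc / 2"
    using has_integral_unique[OF ent[of 2 1] entry_integral[OF r0 ang12[of "u$1" "u$2"]]] hh_pol(4)
    unfolding cc_def by simp
  have "G = (pi * cc / 8) *\<^sub>R (3 *\<^sub>R mat 1 - 2 *\<^sub>R outer u u)"
    using g11 g22 g12 g21 ab
    apply (simp add: vec_eq_iff forall_2 mat_def outer_def field_simps)
    by algebra
  then show ?thesis unfolding G_def cc_def .
qed

lemma mv_N:
  fixes u w :: "real^2"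
  shows "(b *\<^sub>R (3 *\<^sub>R mat 1 - 2 *\<^sub>R outer u u)) *v w = b *\<^sub>R (3 *\<^sub>R w - (2 * (u \<bullet> w)) *\<^sub>R u)"
  by (simp add: vec_eq_iff forall_2 matrix_vector_mult_def sum_2 mat_def outer_def inner_vec_def algebra_simps)

lemma lambda_min_N:
  fixes u :: "real^2"
  assumes u: "norm u = 1" and b: "b > 0"
  shows "lambda_min (b *\<^sub>R (3 *\<^sub>R mat 1 - 2 *\<^sub>R outer u u)) = b"
  unfolding lambda_min_def
proof (rule cInf_eq_minimum)
  have uu: "u \<bullet> u = 1" using u by (simp add: norm_eq_sqrt_inner)
  show "b \<in> {l. \<exists>w. w \<noteq> 0 \<and> (b *\<^sub>R (3 *\<^sub>R mat 1 - 2 *\<^sub>R outer u u)) *v w = l *\<^sub>R w}"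
  proof -
    have "(b *\<^sub>R (3 *\<^sub>R mat 1 - 2 *\<^sub>R outer u u)) *v u = b *\<^sub>R u"
      by (simp only: mv_N) (simp add: uu scaleR_left_distrib[symmetric] scaleR_diff_left[symmetric])
    moreover have "u \<noteq> 0" using u by auto
    ultimately show ?thesis by blast
  qed
  fix l assume "l \<in> {l. \<exists>w. w \<noteq> 0 \<and> (b *\<^sub>R (3 *\<^sub>R mat 1 - 2 *\<^sub>R outer u u)) *v w = l *\<^sub>R w}"
  then obtain w where w: "w \<noteq> 0" "b *\<^sub>R (3 *\<^sub>R w - (2 * (u \<bullet> w)) *\<^sub>R u) = l *\<^sub>R w"
    by (auto simp: mv_N)
  have "w \<bullet> (b *\<^sub>R (3 *\<^sub>R w - (2 * (u \<bullet> w)) *\<^sub>R u)) = w \<bullet> (l *\<^sub>R w)" using w(2) by simp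
  then have e: "b * (3 * (w \<bullet> w) - 2 * (u \<bullet> w)\<^sup>2) = l * (w \<bullet> w)"
    by (simp add: inner_diff_right algebra_simps power2_eq_square inner_commute)
  have cs: "(u \<bullet> w)\<^sup>2 \<le> w \<bullet> w"
  proof -
    have "\<bar>u \<bullet> w\<bar> \<le> norm u * norm w" by (rule Cauchy_Schwarz_ineq2)
    then have "(u \<bullet> w)\<^sup>2 \<le> (norm w)\<^sup>2" using u by (metis abs_ge_zero mult_1 power2_abs power_mono)
    then show ?thesis by (simp add: power2_norm_eq_inner)
  qed
  have pos: "w \<bullet> w > 0" using w(1) by simp
  have "b * (w \<bullet> w) \<le> l * (w \<bullet> w)"
    unfolding e[symmetric] using cs b by (simp add: algebra_simps)
  then show "b \<le> l" using pos by simp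
qed

lemma sum_sq: "6 * (\<Sum>t=1..T. (real t)\<^sup>2) = real T * (real T + 1) * (2 * real T + 1)"
  by (induction T) (auto simp: algebra_simps power2_eq_square)

theorem lemma8:
  fixes x v :: "real^2" and kappa r0 R :: real
  assumes "v \<noteq> 0" and "kappa > 0" and "0 < r0" and "r0 < R"
  defines "A \<equiv> \<lambda>T::nat. \<Sum>t=1..T.
      ppp_expect kappa (cball (x + real t *\<^sub>R v) R)
        (\<lambda>p. let d = x + real t *\<^sub>R v - p in
              if r0 \<le> norm d \<and> norm d \<le> R
              then ((real t)\<^sup>2 * (comp_along v d)\<^sup>2 / norm d ^ 8) *\<^sub>R
                     ((norm d)\<^sup>2 *\<^sub>R mat 1 - outer d d)
              else 0)"
  shows "(\<lambda>T. lambda_min (A T) / (real T * (real T + 1) * (2 * real T + 1)))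
           \<longlonglongrightarrow> pi / 48 * kappa * (1 / r0\<^sup>2 - 1 / R\<^sup>2)"
proof -
  define u where "u = v /\<^sub>R norm v"
  have u: "norm u = 1" using assms(1) by (simp add: u_def)
  define cc where "cc = 1 / r0\<^sup>2 - 1 / R\<^sup>2"
  define N where "N = 3 *\<^sub>R mat 1 - 2 *\<^sub>R outer u u"
  have cc: "cc > 0" using assms(3,4) unfolding cc_def
    by (simp add: field_simps power_strict_mono)
  have G: "(\<integral>d. gg r0 R (v /\<^sub>R norm v) d \<partial>lborel) = (pi * cc / 8) *\<^sub>R N"
    using G_value[OF assms(3,4) u] unfolding u_def cc_def N_def .
  have AT: "A T = (kappa * (pi * cc / 8) * (\<Sum>t=1..T. (real t)\<^sup>2)) *\<^sub>R N" for T
  proof -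
    have "A T = (\<Sum>t=1..T. (kappa * (real t)\<^sup>2) *\<^sub>R ((pi * cc / 8) *\<^sub>R N))"
      unfolding A_def using per_t[OF assms(1-4), of "x + real t *\<^sub>R v" t for t] G
      by (intro sum.cong) auto
    also have "\<dots> = (kappa * (pi * cc / 8) * (\<Sum>t=1..T. (real t)\<^sup>2)) *\<^sub>R N"
      by (simp add: scaleR_sum_left[symmetric] sum_distrib_left algebra_simps)
    finally show ?thesis .
  qed
  have ev: "lambda_min (A T) / (real T * (real T + 1) * (2 * real T + 1)) = pi / 48 * kappa * cc"
    if T: "T \<ge> 1" for T
  proof -
    have Spos: "(\<Sum>t=1..T. (real t)\<^sup>2) > 0"
      using T by (intro sum_pos) auto
    have "lambda_min (A T) = kappa * (pi * cc / 8) * (\<Sum>t=1..T. (real t)\<^sup>2)"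
      unfolding AT N_def using Spos assms(2) cc by (intro lambda_min_N u) simp
    moreover have "real T * (real T + 1) * (2 * real T + 1) = 6 * (\<Sum>t=1..T. (real t)\<^sup>2)"
      by (rule sum_sq[symmetric])
    ultimately show ?thesis using Spos by (simp add: field_simps)
  qed
  have "eventually (\<lambda>T. lambda_min (A T) / (real T * (real T + 1) * (2 * real T + 1)) = pi / 48 * kappa * cc) sequentially"
    using ev eventually_sequentially by blast
  then have "(\<lambda>T. lambda_min (A T) / (real T * (real T + 1) * (2 * real T + 1))) \<longlonglongrightarrow> pi / 48 * kappa * cc"
    by (rule tendsto_eventually)
  then show ?thesis unfolding cc_def .
qed

end
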